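(* Let $p,q$ be positive integers, $\mathbf{C}=\begin{bmatrix}1 & p\\ q & 1+pq\end{bmatrix}$, $A=pq+2$, $B=\sqrt{A^2-4}$, and $G_n=\left(\frac{A+B}{2}\right)^n+\left(\frac{A-B}{2}\right)^n$, $H_n=\frac{1}{B}\left(\left(\frac{A+B}{2}\right)^n-\left(\frac{A-B}{2}\right)^n\right)$. Then for every positive integer $n$, $$\mathbf{C}^{-n}=\begin{bmatrix}\frac12 G_n+\frac{A-2}{2}H_n & -p\,H_n\\ -q\,H_n & \frac12 G_n-\frac{A-2}{2}H_n\end{bmatrix}.$$ *)

theory Defs
  imports "HOL-Analysis.Analysis"
begin

primrec matpow :: "real^'n^'n \<Rightarrow> nat \<Rightarrow> real^'n^'n" where
  "matpow M 0 = mat 1"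
| "matpow M (Suc k) = matpow M k ** M"

end

theory Submission
  imports Defs
begin

lemma vec2_eq: "(x::real^2^2) = y \<longleftrightarrow> (x$1$1 = y$1$1 \<and> x$1$2 = y$1$2 \<and> x$2$1 = y$2$1 \<and> x$2$2 = y$2$2)"
  by (auto simp: vec_eq_iff forall_2)

theorem proposition2:
  fixes p q n :: nat
  assumes "p > 0" and "q > 0" and "n > 0"
  defines "C \<equiv> (vector [vector [1, real p], vector [real q, 1 + real p * real q]] :: real^2^2)"
      and "A \<equiv> real p * real q + 2"
  defines "B \<equiv> sqrt (A^2 - 4)"
  defines "G \<equiv> (\<lambda>k::nat. ((A + B) / 2) ^ k + ((A - B) / 2) ^ k)"
      and "H \<equiv> (\<lambda>k::nat. (1 / B) * (((A + B) / 2) ^ k - ((A - B) / 2) ^ k))"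
  shows "matpow (matrix_inv C) n =
    (vector [vector [G n / 2 + (A - 2) / 2 * H n, - real p * H n],
             vector [- real q * H n, G n / 2 - (A - 2) / 2 * H n]] :: real^2^2)"
proof -
  define D where "D = (vector [vector [1 + real p * real q, - real p], vector [- real q, 1]] :: real^2^2)"
  have CD: "C ** D = mat 1" "D ** C = mat 1"
    by (auto simp: vec2_eq C_def D_def matrix_matrix_mult_def sum_2 mat_def algebra_simps)
  have inv: "matrix_inv C = D"
  proof -
    have ex: "C ** matrix_inv C = mat 1 \<and> matrix_inv C ** C = mat 1"
      unfolding matrix_inv_def by (rule someI[of _ D]) (use CD in auto)
    have "matrix_inv C = matrix_inv C ** (C ** D)" using CD by simp
    also have "\<dots> = (matrix_inv C ** C) ** D" by (simp add: matrix_mul_assoc)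
    also have "\<dots> = D" using ex by simp
    finally show ?thesis .
  qed
  have pq: "real p * real q = A - 2" by (simp add: A_def)
  have A3: "A \<ge> 3" using assms(1,2) unfolding A_def
  proof -
    have "real p \<ge> 1" "real q \<ge> 1" using assms(1,2) by auto
    then have "real p * real q \<ge> 1" by (metis mult_ge1_I)
    then show "real p * real q + 2 \<ge> 3" by simp
  qed
  have B2: "B^2 = A^2 - 4" unfolding B_def
  proof -
    have "A^2 \<ge> 3^2" using A3 by (intro power_mono) auto
    then show "(sqrt (A^2 - 4))^2 = A^2 - 4" by simp
  qed
  have Bpos: "B \<noteq> 0" proof
    assume "B = 0"
    then have "A^2 = 4" using B2 by simp
    moreover have "A^2 \<ge> 3^2" using A3 by (intro power_mono) auto
    ultimately show False by simp
  qed
  have G0: "G 0 = 2" and H0: "H 0 = 0" by (simp_all add: G_def H_def)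
  have GS: "G (Suc k) = A/2 * G k + B^2/2 * H k" for k
    unfolding G_def H_def using Bpos by (simp add: field_simps power2_eq_square)
  have HS: "H (Suc k) = A/2 * H k + G k/2" for k
    unfolding G_def H_def using Bpos by (simp add: field_simps)
  have "matpow D k =
    (vector [vector [G k / 2 + (A - 2) / 2 * H k, - real p * H k],
             vector [- real q * H k, G k / 2 - (A - 2) / 2 * H k]] :: real^2^2)" for k
  proof (induction k)
    case 0
    then show ?case by (simp add: vec2_eq G0 H0 mat_def)
  next
    case (Suc k)
    show ?case
      apply (simp only: matpow.simps Suc)
      apply (simp add: vec2_eq D_def matrix_matrix_mult_def sum_2 GS HS B2)
      apply (simp add: A_def power2_eq_square field_simps)
      done
  qed
  then show ?thesis by (simp add: inv)
qed

end
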